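(* Let $\Omega\subset\mathbb{R}^d$ be bounded, closed and $\eta$-prox-regular, $W\in C^1(\mathbb{R}^d)$ $\lambda_W$-geodesically convex on $\mathrm{Conv}(\Omega-\Omega)$ and $V\in C^1(\mathbb{R}^d)$ $\lambda_V$-geodesically convex on $\mathrm{Conv}(\Omega)$. Let $\nu^n,\nu\in\mathcal{P}_2(\Omega)$ with $\nu^n\to\nu$ narrowly and $\sup_n\int_\Omega|x|^2d\nu^n<\infty$. Setting $v^n(x)=-\int_\Omega\nabla W(x-y)d\nu^n(y)-\nabla V(x)$ and $v(x)=-\int_\Omega\nabla W(x-y)d\nu(y)-\nabla V(x)$, we have $$\int_\Omega|P_x(v(x))|^2d\nu(x)\le\liminf_{n\to\infty}\int_\Omega|P_x(v^n(x))|^2d\nu^n(x).$$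
   Context: For closed $S$, $P_S(y)$ is the set of nearest points; proximal normal cone $N^P(S,x)=\{v:\exists\alpha>0,\ x\in P_S(x+\alpha v)\}$; $S$ is $\eta$-prox-regular if for every $x\in\partial S$, $v\in N^P(S,x)$, $|v|=1$, the open ball $B_\eta(x+\eta v)$ misses $S$. $T(\Omega,x)$ is the Clarke tangent cone ($v$ such that for all $t_n\searrow0$, $x_n\in\Omega$, $x_n\to x$, there exist $v_n\to v$ with $x_n+t_nv_n\in\Omega$); $P_x(w)$ is its nearest point to $w$. $\mathcal{P}_2(\Omega)$: probability measures with finite second moment. $\lambda$-geodesic convexity on convex $K$: $f(y)\ge f(x)+\langle\nabla f(x),y-x\rangle+\frac\lambda2|y-x|^2$ on $K$. *)

theory Defs
  imports "HOL-Analysis.Analysis" "HOL-Probability.Probability"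
begin

definition nearest_points :: "'a::euclidean_space set \<Rightarrow> 'a \<Rightarrow> 'a set" where
  "nearest_points S y = {x \<in> S. \<forall>z\<in>S. dist y x \<le> dist y z}"

definition prox_normal_cone :: "'a::euclidean_space set \<Rightarrow> 'a \<Rightarrow> 'a set" where
  "prox_normal_cone S x = {v. \<exists>\<alpha>>0. x \<in> nearest_points S (x + \<alpha> *\<^sub>R v)}"

definition prox_regular :: "real \<Rightarrow> 'a::euclidean_space set \<Rightarrow> bool" where
  "prox_regular \<eta> S \<longleftrightarrow>
     (\<forall>x\<in>frontier S. \<forall>v\<in>prox_normal_cone S x. norm v = 1 \<longrightarrow>
        ball (x + \<eta> *\<^sub>R v) \<eta> \<inter> S = {})"

definition clarke_tangent_cone :: "'a::euclidean_space set \<Rightarrow> 'a \<Rightarrow> 'a set" where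
  "clarke_tangent_cone \<Omega> x = {v. \<forall>(t::nat \<Rightarrow> real) (xs::nat \<Rightarrow> 'a).
      (\<forall>n. t n > 0) \<and> t \<longlonglongrightarrow> 0 \<and> (\<forall>n. xs n \<in> \<Omega>) \<and> xs \<longlonglongrightarrow> x \<longrightarrow>
      (\<exists>vs. vs \<longlonglongrightarrow> v \<and> (\<forall>n. xs n + t n *\<^sub>R vs n \<in> \<Omega>))}"

definition tangent_proj :: "'a::euclidean_space set \<Rightarrow> 'a \<Rightarrow> 'a \<Rightarrow> 'a" where
  "tangent_proj \<Omega> x w = closest_point (clarke_tangent_cone \<Omega> x) w"

definition geod_convex_on :: "real \<Rightarrow> 'a::euclidean_space set \<Rightarrow> ('a \<Rightarrow> real) \<Rightarrow> ('a \<Rightarrow> 'a) \<Rightarrow> bool" where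
  "geod_convex_on lam K f g \<longleftrightarrow>
     (\<forall>x\<in>K. \<forall>y\<in>K. f y \<ge> f x + g x \<bullet> (y - x) + lam / 2 * (norm (y - x))\<^sup>2)"

definition C1_with_gradient :: "('a::euclidean_space \<Rightarrow> real) \<Rightarrow> ('a \<Rightarrow> 'a) \<Rightarrow> bool" where
  "C1_with_gradient f g \<longleftrightarrow>
     (\<forall>x. (f has_derivative (\<lambda>h. g x \<bullet> h)) (at x)) \<and> continuous_on UNIV g"

definition P2 :: "'a::euclidean_space set \<Rightarrow> 'a measure set" where
  "P2 \<Omega> = {\<mu>. prob_space \<mu> \<and> sets \<mu> = sets borel \<and> emeasure \<mu> \<Omega> = 1 \<and>
              (\<integral>\<^sup>+ x. ennreal ((norm x)\<^sup>2) \<partial>\<mu>) < \<infinity>}"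

definition narrow_conv :: "(nat \<Rightarrow> 'a::euclidean_space measure) \<Rightarrow> 'a measure \<Rightarrow> bool" where
  "narrow_conv \<nu>s \<nu> \<longleftrightarrow>
     (\<forall>f :: 'a \<Rightarrow> real. continuous_on UNIV f \<and> bounded (range f) \<longrightarrow>
        (\<lambda>n. \<integral>x. f x \<partial>(\<nu>s n)) \<longlonglongrightarrow> (\<integral>x. f x \<partial>\<nu>))"

end

theory Submission
  imports Defs
begin

definition NC :: "real \<Rightarrow> 'a::euclidean_space set \<Rightarrow> 'a \<Rightarrow> 'a set" where
  "NC \<eta> \<Omega> x = {q. \<forall>y\<in>\<Omega>. q \<bullet> (y - x) \<le> norm q * (norm (y - x))\<^sup>2 / (2*\<eta>)}"

definition polar :: "'a::euclidean_space set \<Rightarrow> 'a set" where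
  "polar A = {u. \<forall>q\<in>A. q \<bullet> u \<le> 0}"

lemma norm_diff_sq: "(norm (a - b))\<^sup>2 = (norm a)\<^sup>2 - 2 * (a \<bullet> b) + (norm (b::'a::real_inner))\<^sup>2"
  unfolding power2_norm_eq_inner by (simp add: inner_diff_left inner_diff_right inner_commute)

lemma prox_ineq:
  fixes \<Omega> :: "'a::euclidean_space set"
  assumes cl: "closed \<Omega>" and eta: "\<eta> > 0" and pr: "prox_regular \<eta> \<Omega>"
    and x: "x \<in> \<Omega>" and q: "q \<in> prox_normal_cone \<Omega> x"
  shows "q \<in> NC \<eta> \<Omega> x"
proof (cases "q = 0")
  case True then show ?thesis by (simp add: NC_def)
next
  case False
  then have nq: "norm q > 0" by simp
  from q obtain \<alpha> where a: "\<alpha> > 0" and near: "x \<in> nearest_points \<Omega> (x + \<alpha> *\<^sub>R q)"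
    by (auto simp: prox_normal_cone_def)
  have md: "\<And>z. z \<in> \<Omega> \<Longrightarrow> dist (x + \<alpha> *\<^sub>R q) x \<le> dist (x + \<alpha> *\<^sub>R q) z"
    using near by (auto simp: nearest_points_def)
  have fr: "x \<in> frontier \<Omega>"
  proof (rule ccontr)
    assume "x \<notin> frontier \<Omega>"
    then have "x \<in> interior \<Omega>" using x cl by (simp add: frontier_def)
    then obtain e where e: "e > 0" "ball x e \<subseteq> \<Omega>" by (meson mem_interior)
    define s where "s = min (e / (2 * norm q)) (\<alpha> / 2)"
    have s: "s > 0" "s < \<alpha>" "s * norm q < e" using e a nq
      by (auto simp: s_def min_def field_simps)
    have "x + s *\<^sub>R q \<in> ball x e" using s by (simp add: dist_norm)
    then have "x + s *\<^sub>R q \<in> \<Omega>" using e by auto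
    from md[OF this] have "\<alpha> * norm q \<le> norm ((\<alpha> - s) *\<^sub>R q)"
      using a by (simp add: dist_norm algebra_simps)
    also have "\<dots> = (\<alpha> - s) * norm q" using s by simp
    finally show False using s nq by (simp add: mult_le_cancel_right)
  qed
  define u where "u = q /\<^sub>R norm q"
  have nu: "norm u = 1" using nq by (simp add: u_def)
  have "x + (\<alpha> * norm q) *\<^sub>R u = x + \<alpha> *\<^sub>R q" using nq by (simp add: u_def)
  then have "u \<in> prox_normal_cone \<Omega> x" using near a nq
    unfolding prox_normal_cone_def by (intro CollectI exI[of _ "\<alpha> * norm q"]) simp
  with pr fr nu have emp: "ball (x + \<eta> *\<^sub>R u) \<eta> \<inter> \<Omega> = {}"
    by (auto simp: prox_regular_def)
  show ?thesis unfolding NC_def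
  proof (intro CollectI ballI)
    fix y assume y: "y \<in> \<Omega>"
    then have "y \<notin> ball (x + \<eta> *\<^sub>R u) \<eta>" using emp by auto
    then have "\<eta> \<le> norm (y - x - \<eta> *\<^sub>R u)" by (simp add: dist_norm norm_minus_commute algebra_simps)
    then have "\<eta>\<^sup>2 \<le> (norm (y - x - \<eta> *\<^sub>R u))\<^sup>2" using eta by (simp add: power_mono)
    also have "\<dots> = (norm (y - x))\<^sup>2 - 2 * \<eta> * (u \<bullet> (y - x)) + \<eta>\<^sup>2"
    proof -
      have uu: "u \<bullet> u = 1" using nu by (simp add: norm_eq_1)
      show ?thesis unfolding power2_norm_eq_inner
        by (simp add: inner_diff_left inner_diff_right inner_commute uu algebra_simps power2_eq_square)
    qed
    finally have "u \<bullet> (y - x) \<le> (norm (y - x))\<^sup>2 / (2*\<eta>)" using eta by (simp add: field_simps)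
    then have "norm q * (u \<bullet> (y - x)) \<le> norm q * ((norm (y - x))\<^sup>2 / (2*\<eta>))"
      by (intro mult_left_mono) simp_all
    moreover have "norm q * (u \<bullet> (y - x)) = q \<bullet> (y - x)" using nq by (simp add: u_def)
    ultimately show "q \<bullet> (y - x) \<le> norm q * (norm (y - x))\<^sup>2 / (2*\<eta>)"
      by simp
  qed
qed
lemma NC_zero[simp]: "0 \<in> NC \<eta> \<Omega> x" by (simp add: NC_def)

lemma NC_scale:
  assumes "q \<in> NC \<eta> \<Omega> x" "c \<ge> 0" shows "c *\<^sub>R q \<in> NC \<eta> \<Omega> x"
  unfolding NC_def
proof (intro CollectI ballI)
  fix y assume "y \<in> \<Omega>"
  then have "q \<bullet> (y - x) \<le> norm q * (norm (y - x))\<^sup>2 / (2*\<eta>)" using assms by (auto simp: NC_def)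
  then have "c * (q \<bullet> (y - x)) \<le> c * (norm q * (norm (y - x))\<^sup>2 / (2*\<eta>))"
    using assms(2) by (rule mult_left_mono)
  then show "c *\<^sub>R q \<bullet> (y - x) \<le> norm (c *\<^sub>R q) * (norm (y - x))\<^sup>2 / (2*\<eta>)"
    using assms(2) by simp
qed

lemma NC_add:
  fixes \<Omega> :: "'a::euclidean_space set"
  assumes cl: "closed \<Omega>" and eta: "\<eta> > 0" and pr: "prox_regular \<eta> \<Omega>"
    and x: "x \<in> \<Omega>" and q1: "q1 \<in> NC \<eta> \<Omega> x" and q2: "q2 \<in> NC \<eta> \<Omega> x"
  shows "q1 + q2 \<in> NC \<eta> \<Omega> x"
proof -
  define q where "q = q1 + q2"
  define C where "C = (norm q1 + norm q2) / (2*\<eta>)"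
  have C0: "C \<ge> 0" using eta by (simp add: C_def)
  have qC: "q \<bullet> (y - x) \<le> C * (norm (y - x))\<^sup>2" if "y \<in> \<Omega>" for y
  proof -
    have "q1 \<bullet> (y - x) \<le> norm q1 * (norm (y - x))\<^sup>2 / (2*\<eta>)"
         "q2 \<bullet> (y - x) \<le> norm q2 * (norm (y - x))\<^sup>2 / (2*\<eta>)"
      using q1 q2 that by (auto simp: NC_def)
    then show ?thesis by (simp add: q_def C_def inner_add_left add_divide_distrib algebra_simps)
  qed
  define s where "s = 1 / (2*C + 1)"
  have s: "s > 0" "2 * s * C \<le> 1" using C0 by (auto simp: s_def field_simps)
  have "x \<in> nearest_points \<Omega> (x + s *\<^sub>R q)"
    unfolding nearest_points_def
  proof (intro CollectI conjI ballI x)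
    fix y assume y: "y \<in> \<Omega>"
    have "2 * s * (q \<bullet> (y - x)) \<le> 2 * s * (C * (norm (y - x))\<^sup>2)"
      using qC[OF y] s by simp
    also have "\<dots> = (2 * s * C) * (norm (y - x))\<^sup>2" by simp
    also have "\<dots> \<le> (norm (y - x))\<^sup>2" by (rule mult_left_le_one_le) (use s C0 in auto)
    finally have h: "2 * s * (q \<bullet> (y - x)) \<le> (norm (y - x))\<^sup>2" .
    have ee: "x + s *\<^sub>R q - y = s *\<^sub>R q - (y - x)" by (simp add: algebra_simps)
    have e1: "(dist (x + s *\<^sub>R q) y)\<^sup>2 = (norm (s *\<^sub>R q))\<^sup>2 - 2 * s * (q \<bullet> (y - x)) + (norm (y - x))\<^sup>2"
      unfolding dist_norm ee norm_diff_sq by simp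
    have e2: "dist (x + s *\<^sub>R q) x = norm (s *\<^sub>R q)" by (simp add: dist_norm)
    have "(dist (x + s *\<^sub>R q) x)\<^sup>2 \<le> (dist (x + s *\<^sub>R q) y)\<^sup>2" unfolding e1 e2 using h by linarith
    then show "dist (x + s *\<^sub>R q) x \<le> dist (x + s *\<^sub>R q) y"
      by (rule power2_le_imp_le) simp
  qed
  then have "q \<in> prox_normal_cone \<Omega> x" unfolding prox_normal_cone_def
    using s by (intro CollectI exI[of _ s]) simp
  then show ?thesis using prox_ineq[OF cl eta pr x] by (simp add: q_def)
qed

lemma NC_convex:
  fixes \<Omega> :: "'a::euclidean_space set"
  assumes "closed \<Omega>" "\<eta> > 0" "prox_regular \<eta> \<Omega>" "x \<in> \<Omega>"
  shows "convex (NC \<eta> \<Omega> x)"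
  unfolding convex_def
proof (intro ballI allI impI)
  fix a b and u v :: real assume "a \<in> NC \<eta> \<Omega> x" "b \<in> NC \<eta> \<Omega> x" "0 \<le> u" "0 \<le> v" "u + v = 1"
  then show "u *\<^sub>R a + v *\<^sub>R b \<in> NC \<eta> \<Omega> x"
    by (intro NC_add[OF assms] NC_scale) auto
qed

lemma NC_limit:
  assumes eta: "\<eta> > 0" and xs: "xs \<longlonglongrightarrow> x" and qs: "qs \<longlonglongrightarrow> q" and mem: "\<And>n. qs n \<in> NC \<eta> \<Omega> (xs n)"
  shows "q \<in> NC \<eta> \<Omega> x"
  unfolding NC_def
proof (intro CollectI ballI)
  fix y assume y: "y \<in> \<Omega>"
  have "\<And>n. qs n \<bullet> (y - xs n) \<le> norm (qs n) * (norm (y - xs n))\<^sup>2 / (2*\<eta>)"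
    using mem y by (auto simp: NC_def)
  moreover have "(\<lambda>n. qs n \<bullet> (y - xs n)) \<longlonglongrightarrow> q \<bullet> (y - x)"
    by (intro tendsto_intros qs xs)
  moreover have "(\<lambda>n. norm (qs n) * (norm (y - xs n))\<^sup>2 / (2*\<eta>)) \<longlonglongrightarrow> norm q * (norm (y - x))\<^sup>2 / (2*\<eta>)"
    by (intro tendsto_intros qs xs) (use eta in simp)
  ultimately show "q \<bullet> (y - x) \<le> norm q * (norm (y - x))\<^sup>2 / (2*\<eta>)"
    by (intro LIMSEQ_le) auto
qed

lemma NC_closed: assumes "\<eta> > 0" shows "closed (NC \<eta> \<Omega> x)"
  unfolding closed_sequential_limits
proof (intro allI impI)
  fix f l assume "(\<forall>n. f n \<in> NC \<eta> \<Omega> x) \<and> f \<longlonglongrightarrow> l"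
  then show "l \<in> NC \<eta> \<Omega> x"
    using NC_limit[where xs="\<lambda>n. x" and x=x and qs=f and q=l] \<open>\<eta> > 0\<close> by simp
qed

lemma polar_closed: "closed (polar A)"
proof -
  have "polar A = (\<Inter>q\<in>A. {u. q \<bullet> u \<le> 0})" by (auto simp: polar_def)
  also have "closed \<dots>" by (intro closed_INT ballI closed_Collect_le continuous_intros)
  finally show ?thesis .
qed

lemma polar_convex: "convex (polar A)"
  unfolding convex_def polar_def
proof (intro ballI allI impI, safe)
  fix x y u v q assume h: "\<forall>q\<in>A. q \<bullet> x \<le> 0" "\<forall>q\<in>A. q \<bullet> y \<le> 0" "0 \<le> (u::real)" "0 \<le> (v::real)" "q \<in> A"
  then have "u * (q \<bullet> x) \<le> 0" "v * (q \<bullet> y) \<le> 0" by (auto intro: mult_nonneg_nonpos)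
  then show "q \<bullet> (u *\<^sub>R x + v *\<^sub>R y) \<le> 0" by (simp add: inner_add_right)
qed

lemma polar_zero[simp]: "0 \<in> polar A" by (simp add: polar_def)

lemma tangent_sub_polar:
  fixes \<Omega> :: "'a::euclidean_space set"
  assumes eta: "\<eta> > 0" and x: "x \<in> \<Omega>" and u: "u \<in> clarke_tangent_cone \<Omega> x"
  shows "u \<in> polar (NC \<eta> \<Omega> x)"
  unfolding polar_def
proof (intro CollectI ballI)
  fix q assume q: "q \<in> NC \<eta> \<Omega> x"
  define t where "t = (\<lambda>n. inverse (real (Suc n)))"
  have t0: "\<And>n. t n > 0" by (simp add: t_def)
  have tl: "t \<longlonglongrightarrow> 0" unfolding t_def by (rule LIMSEQ_inverse_real_of_nat)
  have "\<forall>(t::nat \<Rightarrow> real) (xs::nat \<Rightarrow> 'a).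
      (\<forall>n. t n > 0) \<and> t \<longlonglongrightarrow> 0 \<and> (\<forall>n. xs n \<in> \<Omega>) \<and> xs \<longlonglongrightarrow> x \<longrightarrow>
      (\<exists>vs. vs \<longlonglongrightarrow> u \<and> (\<forall>n. xs n + t n *\<^sub>R vs n \<in> \<Omega>))"
    using u unfolding clarke_tangent_cone_def by simp
  note A = this
  have imp: "(\<forall>n. t n > 0) \<and> t \<longlonglongrightarrow> 0 \<and> (\<forall>n. (\<lambda>n. x) n \<in> \<Omega>) \<and> (\<lambda>n. x) \<longlonglongrightarrow> x \<longrightarrow>
      (\<exists>vs. vs \<longlonglongrightarrow> u \<and> (\<forall>n. (\<lambda>n. x) n + t n *\<^sub>R vs n \<in> \<Omega>))"
    using spec[OF spec[OF A, of t], of "\<lambda>n. x"] by simp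
  have pre: "(\<forall>n. t n > 0) \<and> t \<longlonglongrightarrow> 0 \<and> (\<forall>n. (\<lambda>n. x) n \<in> \<Omega>) \<and> (\<lambda>n. x) \<longlonglongrightarrow> x"
    using t0 tl x by simp
  from mp[OF imp pre] obtain vs where vs: "vs \<longlonglongrightarrow> u" and mem0: "\<forall>n. x + t n *\<^sub>R vs n \<in> \<Omega>"
    by blast
  have mem: "\<And>n. x + t n *\<^sub>R vs n \<in> \<Omega>" using mem0 by simp
  have le: "q \<bullet> vs n \<le> norm q * t n * (norm (vs n))\<^sup>2 / (2*\<eta>)" for n
  proof -
    have "q \<bullet> (x + t n *\<^sub>R vs n - x) \<le> norm q * (norm (x + t n *\<^sub>R vs n - x))\<^sup>2 / (2*\<eta>)"
      using q mem[of n] by (auto simp: NC_def)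
    then have "t n * (q \<bullet> vs n) \<le> norm q * (t n)\<^sup>2 * (norm (vs n))\<^sup>2 / (2*\<eta>)"
      using t0[of n] by (simp add: power_mult_distrib)
    also have "\<dots> = t n * (norm q * t n * (norm (vs n))\<^sup>2 / (2*\<eta>))"
      by (simp add: power2_eq_square)
    finally have "t n * (q \<bullet> vs n) \<le> t n * (norm q * t n * (norm (vs n))\<^sup>2 / (2*\<eta>))" .
    then show ?thesis using t0[of n] by (rule mult_left_le_imp_le)
  qed
  have "(\<lambda>n. norm q * t n * (norm (vs n))\<^sup>2 / (2*\<eta>)) \<longlonglongrightarrow> norm q * 0 * (norm u)\<^sup>2 / (2*\<eta>)"
    by (intro tendsto_intros tl vs) (use eta in simp)
  then have "(\<lambda>n. norm q * t n * (norm (vs n))\<^sup>2 / (2*\<eta>)) \<longlonglongrightarrow> 0" by simp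
  moreover have "(\<lambda>n. q \<bullet> vs n) \<longlonglongrightarrow> q \<bullet> u" by (intro tendsto_intros vs)
  ultimately show "q \<bullet> u \<le> 0" using le by (intro LIMSEQ_le) auto
qed

lemma NC_unif:
  fixes \<Omega> :: "'a::euclidean_space set"
  assumes eta: "\<eta> > 0" and x: "x \<in> \<Omega>" and u: "u \<in> polar (NC \<eta> \<Omega> x)" and e: "\<epsilon> > 0"
  shows "\<exists>\<delta>>0. \<forall>p\<in>\<Omega>. \<forall>\<nu>\<in>NC \<eta> \<Omega> p. dist p x < \<delta> \<longrightarrow> norm \<nu> = 1 \<longrightarrow> \<nu> \<bullet> u < \<epsilon>"
proof (rule ccontr)
  assume neg: "\<not> ?thesis"
  have "\<forall>n. \<exists>p \<nu>. p \<in> \<Omega> \<and> \<nu> \<in> NC \<eta> \<Omega> p \<and> dist p x < inverse (real (Suc n)) \<and> norm \<nu> = 1 \<and> \<nu> \<bullet> u \<ge> \<epsilon>"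
  proof
    fix n
    have "inverse (real (Suc n)) > 0" by simp
    then have "\<not> (\<forall>p\<in>\<Omega>. \<forall>\<nu>\<in>NC \<eta> \<Omega> p. dist p x < inverse (real (Suc n)) \<longrightarrow> norm \<nu> = 1 \<longrightarrow> \<nu> \<bullet> u < \<epsilon>)"
      using neg by blast
    then show "\<exists>p \<nu>. p \<in> \<Omega> \<and> \<nu> \<in> NC \<eta> \<Omega> p \<and> dist p x < inverse (real (Suc n)) \<and> norm \<nu> = 1 \<and> \<nu> \<bullet> u \<ge> \<epsilon>"
      by (auto simp: not_less)
  qed
  then obtain P where "\<forall>n. \<exists>\<nu>. P n \<in> \<Omega> \<and> \<nu> \<in> NC \<eta> \<Omega> (P n) \<and> dist (P n) x < inverse (real (Suc n)) \<and> norm \<nu> = 1 \<and> \<nu> \<bullet> u \<ge> \<epsilon>"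
    by (rule choice[THEN exE])
  then obtain N where PN': "\<forall>n. P n \<in> \<Omega> \<and> N n \<in> NC \<eta> \<Omega> (P n) \<and> dist (P n) x < inverse (real (Suc n)) \<and> norm (N n) = 1 \<and> N n \<bullet> u \<ge> \<epsilon>"
    by (rule choice[THEN exE])
  then have PN: "\<And>n. P n \<in> \<Omega> \<and> N n \<in> NC \<eta> \<Omega> (P n) \<and> dist (P n) x < inverse (real (Suc n)) \<and> norm (N n) = 1 \<and> N n \<bullet> u \<ge> \<epsilon>"
    by blast
  have "seq_compact (sphere (0::'a) 1)" by (intro compact_imp_seq_compact compact_sphere)
  moreover have "\<forall>n. N n \<in> sphere 0 1" using PN by simp
  ultimately obtain l r where l: "l \<in> sphere 0 1" and r: "strict_mono r" and lim: "(N \<circ> r) \<longlonglongrightarrow> l"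
    by (rule seq_compactE)
  have "(\<lambda>n. dist (P n) x) \<longlonglongrightarrow> 0"
  proof (rule tendsto_sandwich[of "\<lambda>n. 0" _ _ "\<lambda>n. inverse (real (Suc n))"])
    show "\<forall>\<^sub>F n in sequentially. 0 \<le> dist (P n) x" by simp
    have "\<And>n. dist (P n) x \<le> inverse (real (Suc n))" using PN by (simp add: less_imp_le)
    then show "\<forall>\<^sub>F n in sequentially. dist (P n) x \<le> inverse (real (Suc n))" by simp
    show "(\<lambda>n. 0) \<longlonglongrightarrow> 0" by simp
    show "(\<lambda>n. inverse (real (Suc n))) \<longlonglongrightarrow> 0" by (rule LIMSEQ_inverse_real_of_nat)
  qed
  then have "P \<longlonglongrightarrow> x" using tendsto_dist_iff by blast
  then have Pr: "(P \<circ> r) \<longlonglongrightarrow> x" using r LIMSEQ_subseq_LIMSEQ by blast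
  have "l \<in> NC \<eta> \<Omega> x"
    by (rule NC_limit[OF eta Pr lim]) (use PN in simp)
  then have "l \<bullet> u \<le> 0" using u by (auto simp: polar_def)
  moreover have "(\<lambda>n. (N \<circ> r) n \<bullet> u) \<longlonglongrightarrow> l \<bullet> u" by (intro tendsto_intros lim)
  then have "l \<bullet> u \<ge> \<epsilon>" by (rule LIMSEQ_le_const) (use PN in auto)
  ultimately show False using e by simp
qed

lemma polar_sub_tangent:
  fixes \<Omega> :: "'a::euclidean_space set"
  assumes cl: "closed \<Omega>" and eta: "\<eta> > 0" and pr: "prox_regular \<eta> \<Omega>"
    and x: "x \<in> \<Omega>" and u: "u \<in> polar (NC \<eta> \<Omega> x)"
  shows "u \<in> clarke_tangent_cone \<Omega> x"
  unfolding clarke_tangent_cone_def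
proof (intro CollectI allI impI)
  fix t :: "nat \<Rightarrow> real" and xs :: "nat \<Rightarrow> 'a"
  assume h: "(\<forall>n. 0 < t n) \<and> t \<longlonglongrightarrow> 0 \<and> (\<forall>n. xs n \<in> \<Omega>) \<and> xs \<longlonglongrightarrow> x"
  then have t0: "\<And>n. t n > 0" and tl: "t \<longlonglongrightarrow> 0" and xsO: "\<And>n. xs n \<in> \<Omega>" and xsl: "xs \<longlonglongrightarrow> x"
    by auto
  have ne: "\<Omega> \<noteq> {}" using x by auto
  define z where "z = (\<lambda>n. xs n + t n *\<^sub>R u)"
  define p where "p = (\<lambda>n. closest_point \<Omega> (z n))"
  define vs where "vs = (\<lambda>n. (p n - xs n) /\<^sub>R t n)"
  have pO: "p n \<in> \<Omega>" for n using closest_point_exists[OF cl ne] by (simp add: p_def)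
  have pmin: "\<And>y. y \<in> \<Omega> \<Longrightarrow> dist (z n) (p n) \<le> dist (z n) y" for n
    using closest_point_exists[OF cl ne] by (simp add: p_def)
  have dz: "dist (z n) (p n) \<le> t n * norm u" for n
    using pmin[OF xsO[of n], of n] t0[of n] by (simp add: z_def dist_norm)
  have dxp: "dist (xs n) (p n) \<le> 2 * t n * norm u" for n
  proof -
    have "dist (xs n) (p n) \<le> dist (xs n) (z n) + dist (z n) (p n)" by (rule dist_triangle)
    also have "dist (xs n) (z n) = t n * norm u" using t0[of n] by (simp add: z_def dist_norm)
    finally show ?thesis using dz[of n] by simp
  qed
  have eqp: "xs n + t n *\<^sub>R vs n = p n" for n using t0[of n] by (simp add: vs_def)
  have "vs \<longlonglongrightarrow> u"
    unfolding tendsto_iff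
  proof (intro allI impI)
    fix e :: real assume e: "e > 0"
    define \<epsilon> where "\<epsilon> = e / 3"
    have ep: "\<epsilon> > 0" using e by (simp add: \<epsilon>_def)
    obtain \<delta> where d: "\<delta> > 0" and U0: "\<forall>p'\<in>\<Omega>. \<forall>\<nu>\<in>NC \<eta> \<Omega> p'. dist p' x < \<delta> \<longrightarrow> norm \<nu> = 1 \<longrightarrow> \<nu> \<bullet> u < \<epsilon>"
      using NC_unif[OF eta x u ep] by blast
    have U: "\<And>p' \<nu>. p' \<in> \<Omega> \<Longrightarrow> \<nu> \<in> NC \<eta> \<Omega> p' \<Longrightarrow> dist p' x < \<delta> \<Longrightarrow> norm \<nu> = 1 \<Longrightarrow> \<nu> \<bullet> u < \<epsilon>"
      using U0 by blast
    have "\<delta> / 2 > 0" using d by simp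
    then have ev1: "\<forall>\<^sub>F n in sequentially. dist (xs n) x < \<delta> / 2"
      using xsl unfolding tendsto_iff by blast
    have "(\<lambda>n. t n * (2 * norm u)) \<longlonglongrightarrow> 0 * (2 * norm u)" by (intro tendsto_intros tl)
    then have l2: "(\<lambda>n. t n * (2 * norm u)) \<longlonglongrightarrow> 0" by simp
    have ev2: "\<forall>\<^sub>F n in sequentially. t n * (2 * norm u) < \<delta> / 2"
      by (rule order_tendstoD(2)[OF l2]) (use d in simp)
    have "(\<lambda>n. 2 * t n * (norm u)\<^sup>2 / \<eta>) \<longlonglongrightarrow> 2 * 0 * (norm u)\<^sup>2 / \<eta>"
      by (intro tendsto_intros tl) (use eta in simp)
    then have l3: "(\<lambda>n. 2 * t n * (norm u)\<^sup>2 / \<eta>) \<longlonglongrightarrow> 0" by simp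
    have ev3: "\<forall>\<^sub>F n in sequentially. 2 * t n * (norm u)\<^sup>2 / \<eta> < \<epsilon>"
      by (rule order_tendstoD(2)[OF l3 ep])
    show "\<forall>\<^sub>F n in sequentially. dist (vs n) u < e"
      using ev1 ev2 ev3
    proof eventually_elim
      case (elim n)
      define d where "d = dist (z n) (p n)"
      have tn: "t n > 0" using t0 by simp
      have dvs: "dist (vs n) u = d / t n"
      proof -
        have "vs n - u = (p n - z n) /\<^sub>R t n" using tn by (simp add: vs_def z_def algebra_simps)
        then show ?thesis using tn by (simp add: dist_norm d_def norm_minus_commute divide_inverse mult.commute)
      qed
      have px: "dist (p n) x < \<delta>"
      proof -
        have "dist (p n) x \<le> dist (p n) (xs n) + dist (xs n) x" by (rule dist_triangle)
        then show ?thesis using dxp[of n] elim by (simp add: dist_commute algebra_simps)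
      qed
      have "d < 2 * \<epsilon> * t n"
      proof (cases "d = 0")
        case True then show ?thesis using tn ep by simp
      next
        case False
        then have dpos: "d > 0" by (simp add: d_def)
        define \<nu> where "\<nu> = (z n - p n) /\<^sub>R d"
        have nn: "norm \<nu> = 1" using dpos by (simp add: \<nu>_def d_def dist_norm)
        have "p n + d *\<^sub>R \<nu> = z n" using dpos by (simp add: \<nu>_def)
        moreover have "p n \<in> nearest_points \<Omega> (z n)" using pO pmin by (simp add: nearest_points_def)
        ultimately have "\<nu> \<in> prox_normal_cone \<Omega> (p n)" using dpos
          unfolding prox_normal_cone_def by (intro CollectI exI[of _ d]) simp
        then have nuN: "\<nu> \<in> NC \<eta> \<Omega> (p n)" using prox_ineq[OF cl eta pr pO] by simp
        have nu_u: "\<nu> \<bullet> u < \<epsilon>" using U[OF pO nuN px nn] .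
        have i1: "\<nu> \<bullet> (xs n - p n) \<le> (norm (xs n - p n))\<^sup>2 / (2*\<eta>)"
          using nuN xsO[of n] nn by (auto simp: NC_def)
        have dd: "d = \<nu> \<bullet> (z n - p n)"
        proof -
          have "\<nu> \<bullet> (z n - p n) = ((z n - p n) \<bullet> (z n - p n)) / d" by (simp add: \<nu>_def divide_inverse)
          also have "(z n - p n) \<bullet> (z n - p n) = d\<^sup>2" by (simp add: d_def dist_norm power2_norm_eq_inner)
          finally show ?thesis using dpos by (simp add: power2_eq_square)
        qed
        also have "\<nu> \<bullet> (z n - p n) = \<nu> \<bullet> (xs n - p n) + t n * (\<nu> \<bullet> u)"
          by (simp add: z_def inner_diff_right inner_add_right algebra_simps)
        finally have "d \<le> (norm (xs n - p n))\<^sup>2 / (2*\<eta>) + t n * (\<nu> \<bullet> u)" using i1 by linarith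
        moreover have "(norm (xs n - p n))\<^sup>2 \<le> (2 * t n * norm u)\<^sup>2"
          using dxp[of n] by (simp add: dist_norm power_mono)
        moreover have "(norm (xs n - p n))\<^sup>2 / (2*\<eta>) \<le> (2 * t n * norm u)\<^sup>2 / (2*\<eta>)"
          using calculation(2) eta by (simp add: divide_right_mono)
        moreover have "t n * (\<nu> \<bullet> u) \<le> t n * \<epsilon>" using nu_u tn by simp
        ultimately have A: "d \<le> (2 * t n * norm u)\<^sup>2 / (2*\<eta>) + t n * \<epsilon>"
          by linarith
        have B: "(2 * t n * norm u)\<^sup>2 / (2*\<eta>) = t n * (2 * t n * (norm u)\<^sup>2 / \<eta>)"
          using eta by (simp add: power2_eq_square field_simps)
        have C: "t n * (2 * t n * (norm u)\<^sup>2 / \<eta>) < t n * \<epsilon>"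
          by (rule mult_strict_left_mono) (use elim tn in auto)
        from A B C have "d < t n * \<epsilon> + t n * \<epsilon>" by linarith
        then show ?thesis by (simp add: algebra_simps)
      qed
      then have "d / t n < 2 * \<epsilon>" using tn by (simp add: divide_less_eq)
      moreover have "2 * \<epsilon> < e" using e by (simp add: \<epsilon>_def)
      ultimately show ?case using dvs by linarith
    qed
  qed
  moreover have "\<forall>n. xs n + t n *\<^sub>R vs n \<in> \<Omega>" using eqp pO by simp
  ultimately show "\<exists>vs. vs \<longlonglongrightarrow> u \<and> (\<forall>n. xs n + t n *\<^sub>R vs n \<in> \<Omega>)"
    by blast
qed

lemma tangent_eq:
  fixes \<Omega> :: "'a::euclidean_space set"
  assumes cl: "closed \<Omega>" and eta: "\<eta> > 0" and pr: "prox_regular \<eta> \<Omega>" and x: "x \<in> \<Omega>"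
  shows "clarke_tangent_cone \<Omega> x = polar (NC \<eta> \<Omega> x)"
  using tangent_sub_polar[OF eta x] polar_sub_tangent[OF cl eta pr x] by blast

lemma tp_eq:
  fixes \<Omega> :: "'a::euclidean_space set"
  assumes cl: "closed \<Omega>" and eta: "\<eta> > 0" and pr: "prox_regular \<eta> \<Omega>" and x: "x \<in> \<Omega>"
  shows "tangent_proj \<Omega> x w = w - closest_point (NC \<eta> \<Omega> x) w"
proof -
  let ?N = "NC \<eta> \<Omega> x"
  let ?K = "polar ?N"
  define c where "c = closest_point ?N w"
  have Nc: "convex ?N" "closed ?N" "?N \<noteq> {}" using NC_convex[OF cl eta pr x] NC_closed[OF eta] NC_zero by blast+
  have cN: "c \<in> ?N" using closest_point_exists(1)[OF Nc(2,3)] by (simp add: c_def)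
  have cd: "\<And>y. y \<in> ?N \<Longrightarrow> (w - c) \<bullet> (y - c) \<le> 0"
    using closest_point_dot[OF Nc(1,2)] by (simp add: c_def)
  have "(w - c) \<bullet> (0 - c) \<le> 0" using cd[of 0] by simp
  moreover have "(w - c) \<bullet> (2 *\<^sub>R c - c) \<le> 0" using cd[OF NC_scale[OF cN, of 2]] by simp
  ultimately have wcc: "(w - c) \<bullet> c = 0" by (simp add: algebra_simps inner_diff_right)
  have rK: "w - c \<in> ?K" unfolding polar_def
  proof (intro CollectI ballI)
    fix q assume q: "q \<in> ?N"
    have "(w - c) \<bullet> (q + c - c) \<le> 0" using cd[OF NC_add[OF cl eta pr x q cN]] .
    then show "q \<bullet> (w - c) \<le> 0" by (simp add: inner_commute)
  qed
  have "w - c = closest_point ?K w"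
  proof (rule closest_point_unique[OF polar_convex polar_closed rK], intro ballI)
    fix z assume z: "z \<in> ?K"
    have cz: "c \<bullet> z \<le> 0" using z cN by (auto simp: polar_def)
    have "c \<bullet> (w - z) = c \<bullet> (w - c) + c \<bullet> c - c \<bullet> z"
      by (simp add: inner_diff_right)
    moreover have "c \<bullet> (w - c) = 0" using wcc by (simp add: inner_commute)
    ultimately have "(norm c)\<^sup>2 \<le> c \<bullet> (w - z)" using cz by (simp add: power2_norm_eq_inner)
    also have "\<dots> \<le> norm (w - z) * norm c" using norm_cauchy_schwarz[of c "w - z"] by (simp add: mult.commute)
    finally have "norm c \<le> norm (w - z)"
      by (cases "c = 0") (auto simp: power2_eq_square mult_le_cancel_right)
    then show "dist w (w - c) \<le> dist w z" by (simp add: dist_norm)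
  qed
  then show ?thesis using tangent_eq[OF cl eta pr x] by (simp add: tangent_proj_def c_def)
qed

lemma tp_le:
  fixes \<Omega> :: "'a::euclidean_space set"
  assumes cl: "closed \<Omega>" and eta: "\<eta> > 0" and pr: "prox_regular \<eta> \<Omega>" and x: "x \<in> \<Omega>"
    and q: "q \<in> NC \<eta> \<Omega> x"
  shows "norm (tangent_proj \<Omega> x w) \<le> norm (w - q)"
  using closest_point_le[OF NC_closed[OF eta] q, of w] tp_eq[OF cl eta pr x, of w]
  by (simp add: dist_norm)

lemma tp_le0:
  fixes \<Omega> :: "'a::euclidean_space set"
  assumes cl: "closed \<Omega>" and eta: "\<eta> > 0" and pr: "prox_regular \<eta> \<Omega>" and x: "x \<in> \<Omega>"
  shows "norm (tangent_proj \<Omega> x w) \<le> norm w"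
  using tp_le[OF assms NC_zero] by simp

lemma tp_lip:
  fixes \<Omega> :: "'a::euclidean_space set"
  assumes cl: "closed \<Omega>" and eta: "\<eta> > 0" and pr: "prox_regular \<eta> \<Omega>" and x: "x \<in> \<Omega>"
  shows "\<bar>norm (tangent_proj \<Omega> x w) - norm (tangent_proj \<Omega> x w')\<bar> \<le> norm (w - w')"
proof -
  have "dist (tangent_proj \<Omega> x w) (tangent_proj \<Omega> x w') \<le> dist w w'"
    unfolding tangent_proj_def tangent_eq[OF cl eta pr x]
    by (rule closest_point_lipschitz[OF polar_convex polar_closed]) (use polar_zero in blast)
  moreover have "\<bar>norm (tangent_proj \<Omega> x w) - norm (tangent_proj \<Omega> x w')\<bar> \<le> norm (tangent_proj \<Omega> x w - tangent_proj \<Omega> x w')"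
    by (rule norm_triangle_ineq3)
  ultimately show ?thesis by (simp add: dist_norm)
qed



lemma AE_in_P2:
  assumes "\<mu> \<in> P2 \<Omega>" and "closed \<Omega>"
  shows "AE y in \<mu>. y \<in> \<Omega>"
proof -
  have ps: "prob_space \<mu>" and s: "sets \<mu> = sets borel" and e: "emeasure \<mu> \<Omega> = 1"
    using assms(1) by (auto simp: P2_def)
  have "measure \<mu> \<Omega> = 1" using e by (simp add: measure_def)
  then show ?thesis using prob_space.AE_prob_1[OF ps] by blast
qed

lemma meas_borel:
  assumes "sets \<mu> = sets borel" and "f \<in> borel_measurable borel"
  shows "f \<in> borel_measurable \<mu>"
  using assms measurable_cong_sets[OF assms(1) refl] by simp

lemma P2_nn_eq_integral:
  fixes \<phi> :: "'a::euclidean_space \<Rightarrow> real"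
  assumes P: "\<mu> \<in> P2 \<Omega>" and cl: "closed \<Omega>" and c: "continuous_on UNIV \<phi>"
    and b: "\<And>x. 0 \<le> \<phi> x" "\<And>x. \<phi> x \<le> B"
  shows "(\<integral>\<^sup>+ x. ennreal (\<phi> x * indicator \<Omega> x) \<partial>\<mu>) = ennreal (\<integral> x. \<phi> x \<partial>\<mu>)"
proof -
  have ps: "prob_space \<mu>" and s: "sets \<mu> = sets borel"
    using P by (auto simp: P2_def)
  have m: "\<phi> \<in> borel_measurable \<mu>" by (rule meas_borel[OF s borel_measurable_continuous_onI[OF c]])
  have int: "integrable \<mu> \<phi>"
    by (rule finite_measure.integrable_const_bound[of _ _ B])
       (use ps b m in \<open>auto simp: prob_space_def\<close>)
  have "(\<integral>\<^sup>+ x. ennreal (\<phi> x * indicator \<Omega> x) \<partial>\<mu>) = (\<integral>\<^sup>+ x. ennreal (\<phi> x) \<partial>\<mu>)"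
    by (rule nn_integral_cong_AE) (use AE_in_P2[OF P cl] in \<open>auto\<close>)
  also have "\<dots> = ennreal (\<integral> x. \<phi> x \<partial>\<mu>)"
    by (rule nn_integral_eq_integral[OF int]) (use b in auto)
  finally show ?thesis .
qed

definition infconv :: "('a::metric_space \<Rightarrow> real) \<Rightarrow> 'a set \<Rightarrow> real \<Rightarrow> real \<Rightarrow> 'a \<Rightarrow> real" where
  "infconv F \<Omega> M k x = min M (INF y\<in>\<Omega>. F y + k * dist x y)"

lemma infconv_props:
  fixes F :: "'a::metric_space \<Rightarrow> real"
  assumes ne: "\<Omega> \<noteq> {}" and F0: "\<And>x. x \<in> \<Omega> \<Longrightarrow> 0 \<le> F x" and M: "0 \<le> M" and k: "0 \<le> k"
  shows "continuous_on UNIV (infconv F \<Omega> M k)"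
    and "\<And>x. 0 \<le> infconv F \<Omega> M k x"
    and "\<And>x. infconv F \<Omega> M k x \<le> M"
    and "\<And>x. x \<in> \<Omega> \<Longrightarrow> infconv F \<Omega> M k x \<le> F x"
    and "\<And>x k'. k \<le> k' \<Longrightarrow> infconv F \<Omega> M k x \<le> infconv F \<Omega> M k' x"
proof -
  define \<Phi> where "\<Phi> = (\<lambda>k x. INF y\<in>\<Omega>. F y + k * dist x y)"
  have bdd: "bdd_below ((\<lambda>y. F y + k' * dist x y) ` \<Omega>)" if "0 \<le> k'" for k' x
    by (rule bdd_belowI2[where m=0]) (use F0 that in auto)
  have P0: "0 \<le> \<Phi> k' x" if "0 \<le> k'" for k' x
    unfolding \<Phi>_def by (rule cINF_greatest[OF ne]) (use F0 that in auto)
  have lip: "\<Phi> k x \<le> \<Phi> k x' + k * dist x x'" for x x'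
  proof -
    have "\<Phi> k x - k * dist x x' \<le> \<Phi> k x'"
      unfolding \<Phi>_def
    proof (rule cINF_greatest[OF ne])
      fix y assume y: "y \<in> \<Omega>"
      have "(INF y\<in>\<Omega>. F y + k * dist x y) \<le> F y + k * dist x y" by (rule cINF_lower[OF bdd[OF k] y])
      also have "\<dots> \<le> F y + k * dist x' y + k * dist x x'"
      proof -
        have "dist x y \<le> dist x x' + dist x' y" by (rule dist_triangle)
        then have "k * dist x y \<le> k * dist x x' + k * dist x' y" using k
          by (metis distrib_left mult_left_mono)
        then show ?thesis by simp
      qed
      finally show "(INF y\<in>\<Omega>. F y + k * dist x y) - k * dist x x' \<le> F y + k * dist x' y" by simp
    qed
    then show ?thesis by simp
  qed
  have "k-lipschitz_on UNIV (\<Phi> k)"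
  proof (rule lipschitz_onI)
    fix x x' :: 'a
    have "\<Phi> k x \<le> \<Phi> k x' + k * dist x x'" by (rule lip)
    moreover have "\<Phi> k x' \<le> \<Phi> k x + k * dist x x'" using lip[of x' x] by (simp add: dist_commute)
    ultimately show "dist (\<Phi> k x) (\<Phi> k x') \<le> k * dist x x'" by (simp add: dist_real_def abs_le_iff)
  qed (use k in simp)
  then have "continuous_on UNIV (\<Phi> k)" by (rule lipschitz_on_continuous_on)
  then have "continuous_on UNIV (\<lambda>x. min M (\<Phi> k x))" by (intro continuous_intros)
  then show "continuous_on UNIV (infconv F \<Omega> M k)" by (simp add: infconv_def \<Phi>_def)
  show "\<And>x. 0 \<le> infconv F \<Omega> M k x" using P0[OF k] M by (simp add: infconv_def \<Phi>_def)
  show "\<And>x. infconv F \<Omega> M k x \<le> M" by (simp add: infconv_def)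
  show "infconv F \<Omega> M k x \<le> F x" if "x \<in> \<Omega>" for x
  proof -
    have "(INF y\<in>\<Omega>. F y + k * dist x y) \<le> F x + k * dist x x" by (rule cINF_lower[OF bdd[OF k] that])
    then show ?thesis by (simp add: infconv_def)
  qed
  show "infconv F \<Omega> M k x \<le> infconv F \<Omega> M k' x" if "k \<le> k'" for x k'
  proof -
    have "(INF y\<in>\<Omega>. F y + k * dist x y) \<le> (INF y\<in>\<Omega>. F y + k' * dist x y)"
    proof (rule cINF_greatest[OF ne])
      fix y assume y: "y \<in> \<Omega>"
      have "(INF y\<in>\<Omega>. F y + k * dist x y) \<le> F y + k * dist x y" by (rule cINF_lower[OF bdd[OF k] y])
      also have "\<dots> \<le> F y + k' * dist x y" using that by (simp add: mult_right_mono)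
      finally show "(INF y\<in>\<Omega>. F y + k * dist x y) \<le> F y + k' * dist x y" .
    qed
    then show ?thesis by (simp add: infconv_def min.coboundedI2)
  qed
qed

lemma infconv_sup:
  fixes F :: "'a::metric_space \<Rightarrow> real"
  assumes ne: "\<Omega> \<noteq> {}" and F0: "\<And>x. x \<in> \<Omega> \<Longrightarrow> 0 \<le> F x" and FM: "\<And>x. x \<in> \<Omega> \<Longrightarrow> F x \<le> M"
    and lsc: "\<And>x e. x \<in> \<Omega> \<Longrightarrow> e > 0 \<Longrightarrow> \<exists>\<delta>>0. \<forall>y\<in>\<Omega>. dist y x < \<delta> \<longrightarrow> F x - e \<le> F y"
    and x: "x \<in> \<Omega>" and e: "e > 0"
  shows "\<exists>k::nat. F x - e \<le> infconv F \<Omega> M (real k) x"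
proof -
  obtain \<delta> where d: "\<delta> > 0" and D: "\<And>y. y \<in> \<Omega> \<Longrightarrow> dist y x < \<delta> \<Longrightarrow> F x - e \<le> F y"
    using lsc[OF x e] by blast
  have M0: "0 \<le> M" using F0[OF x] FM[OF x] by simp
  obtain k :: nat where k: "M / \<delta> < real k" using reals_Archimedean2 by blast
  have bdd: "bdd_below ((\<lambda>y. F y + real k * dist x y) ` \<Omega>)"
    by (rule bdd_belowI2[where m=0]) (use F0 in auto)
  have "F x - e \<le> (INF y\<in>\<Omega>. F y + real k * dist x y)"
  proof (rule cINF_greatest[OF ne])
    fix y assume y: "y \<in> \<Omega>"
    show "F x - e \<le> F y + real k * dist x y"
    proof (cases "dist y x < \<delta>")
      case True
      then show ?thesis using D[OF y] by (simp add: add_increasing2)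
    next
      case False
      then have "\<delta> \<le> dist x y" by (simp add: dist_commute)
      moreover have "M < real k * \<delta>" using k d by (simp add: field_simps)
      ultimately have "M \<le> real k * dist x y"
        by (smt (verit) mult_left_mono of_nat_0_le_iff)
      then show ?thesis using FM[OF x] F0[OF y] e by linarith
    qed
  qed
  moreover have "F x - e \<le> M" using FM[OF x] e by simp
  ultimately show ?thesis by (auto simp: infconv_def)
qed

lemma liminf_abstract:
  fixes F :: "'a::euclidean_space \<Rightarrow> real" and G :: "nat \<Rightarrow> 'a \<Rightarrow> real"
  assumes cl: "closed \<Omega>" and ne: "\<Omega> \<noteq> {}"
    and Pn: "\<forall>n. \<nu>s n \<in> P2 \<Omega>" and P: "\<nu> \<in> P2 \<Omega>" and nc: "narrow_conv \<nu>s \<nu>"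
    and F0: "\<And>x. x \<in> \<Omega> \<Longrightarrow> 0 \<le> F x" and FM: "\<And>x. x \<in> \<Omega> \<Longrightarrow> F x \<le> M"
    and lsc: "\<And>x e. x \<in> \<Omega> \<Longrightarrow> e > 0 \<Longrightarrow> \<exists>\<delta>>0. \<forall>y\<in>\<Omega>. dist y x < \<delta> \<longrightarrow> F x - e \<le> F y"
    and G0: "\<And>n x. x \<in> \<Omega> \<Longrightarrow> 0 \<le> G n x"
    and unif: "\<And>e. e > 0 \<Longrightarrow> eventually (\<lambda>n. \<forall>x\<in>\<Omega>. F x - e \<le> G n x) sequentially"
  shows "(\<integral>\<^sup>+ x\<in>\<Omega>. ennreal (F x) \<partial>\<nu>) \<le> liminf (\<lambda>n. \<integral>\<^sup>+ x\<in>\<Omega>. ennreal (G n x) \<partial>(\<nu>s n))"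
proof -
  obtain x0 where x0: "x0 \<in> \<Omega>" using ne by blast
  have M0: "0 \<le> M" using F0[OF x0] FM[OF x0] by simp
  define Fk where "Fk = (\<lambda>k::nat. infconv F \<Omega> M (real k))"
  note props = infconv_props[OF ne F0 M0, where k="real k" for k, simplified]
  have Fk_cont: "continuous_on UNIV (Fk k)" for k using props(1) by (simp add: Fk_def)
  have Fk0: "0 \<le> Fk k x" for k x using props(2) by (simp add: Fk_def)
  have FkM: "Fk k x \<le> M" for k x using props(3) by (simp add: Fk_def)
  have FkF: "x \<in> \<Omega> \<Longrightarrow> Fk k x \<le> F x" for k x using props(4) by (simp add: Fk_def)
  have Fkmono: "k \<le> k' \<Longrightarrow> Fk k x \<le> Fk k' x" for k k' x using props(5) by (simp add: Fk_def)
  have ps: "prob_space \<nu>" and s: "sets \<nu> = sets borel" using P by (auto simp: P2_def)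
  have ind_meas: "indicator \<Omega> \<in> borel_measurable \<nu>"
    by (rule meas_borel[OF s]) (use cl in \<open>simp add: borel_measurable_indicator_iff\<close>)
  have Fk_meas: "Fk k \<in> borel_measurable \<nu>" for k
    by (rule meas_borel[OF s borel_measurable_continuous_onI[OF Fk_cont]])
  have step1: "(\<integral>\<^sup>+ x\<in>\<Omega>. ennreal (F x) \<partial>\<nu>) \<le> (\<integral>\<^sup>+ x. (SUP k. ennreal (Fk k x * indicator \<Omega> x)) \<partial>\<nu>)"
  proof (rule nn_integral_mono)
    fix x
    show "ennreal (F x) * indicator \<Omega> x \<le> (SUP k. ennreal (Fk k x * indicator \<Omega> x))"
    proof (cases "x \<in> \<Omega>")
      case False then show ?thesis by simp
    next
      case True
      have "ennreal (F x) \<le> (SUP k. ennreal (Fk k x))"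
      proof (rule ennreal_le_epsilon)
        fix e :: real assume e: "0 < e"
        obtain k where k: "F x - e \<le> Fk k x"
          using infconv_sup[OF ne F0 FM lsc True e] by (auto simp: Fk_def)
        have "ennreal (F x) \<le> ennreal (Fk k x + e)" using k by (intro ennreal_leI) simp
        also have "\<dots> = ennreal (Fk k x) + ennreal e" using Fk0 e by (simp add: ennreal_plus)
        also have "\<dots> \<le> (SUP k. ennreal (Fk k x)) + ennreal e"
          by (intro add_right_mono SUP_upper) simp
        finally show "ennreal (F x) \<le> (SUP k. ennreal (Fk k x)) + ennreal e" .
      qed
      then show ?thesis using True by simp
    qed
  qed
  have step2: "(\<integral>\<^sup>+ x. (SUP k. ennreal (Fk k x * indicator \<Omega> x)) \<partial>\<nu>) = (SUP k. \<integral>\<^sup>+ x. ennreal (Fk k x * indicator \<Omega> x) \<partial>\<nu>)"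
  proof (rule nn_integral_monotone_convergence_SUP)
    show "incseq (\<lambda>k x. ennreal (Fk k x * indicator \<Omega> x))"
      unfolding incseq_def
    proof (intro allI impI le_funI)
      fix k k' :: nat and x assume "k \<le> k'"
      then show "ennreal (Fk k x * indicator \<Omega> x) \<le> ennreal (Fk k' x * indicator \<Omega> x)"
        using Fkmono[of k k' x] by (intro ennreal_leI) (simp add: indicator_def)
    qed
    show "\<And>k. (\<lambda>x. ennreal (Fk k x * indicator \<Omega> x)) \<in> borel_measurable \<nu>"
      using Fk_meas ind_meas by measurable
  qed
  have step3: "(\<integral>\<^sup>+ x. ennreal (Fk k x * indicator \<Omega> x) \<partial>\<nu>) \<le> liminf (\<lambda>n. \<integral>\<^sup>+ x\<in>\<Omega>. ennreal (G n x) \<partial>(\<nu>s n))" for k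
  proof (rule ennreal_le_epsilon)
    fix e :: real assume e: "0 < e"
    define \<phi> where "\<phi> = (\<lambda>x. max 0 (Fk k x - e))"
    have \<phi>c: "continuous_on UNIV \<phi>" unfolding \<phi>_def by (intro continuous_intros Fk_cont)
    have \<phi>0: "\<And>x. 0 \<le> \<phi> x" by (simp add: \<phi>_def)
    have \<phi>M: "\<phi> x \<le> M" for x
    proof -
      have "Fk k x - e \<le> M" using FkM[of k x] e by linarith
      then show ?thesis using M0 by (simp add: \<phi>_def)
    qed
    have \<phi>_meas: "\<phi> \<in> borel_measurable \<nu>"
      by (rule meas_borel[OF s borel_measurable_continuous_onI[OF \<phi>c]])
    have a: "(\<integral>\<^sup>+ x. ennreal (Fk k x * indicator \<Omega> x) \<partial>\<nu>) \<le> (\<integral>\<^sup>+ x. ennreal (\<phi> x * indicator \<Omega> x) + ennreal e \<partial>\<nu>)"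
    proof (rule nn_integral_mono)
      fix x
      have "Fk k x * indicator \<Omega> x \<le> \<phi> x * indicator \<Omega> x + e"
        using e by (auto simp: \<phi>_def indicator_def)
      then have "ennreal (Fk k x * indicator \<Omega> x) \<le> ennreal (\<phi> x * indicator \<Omega> x + e)"
        by (rule ennreal_leI)
      also have "\<dots> = ennreal (\<phi> x * indicator \<Omega> x) + ennreal e"
        using \<phi>0[of x] e by (intro ennreal_plus) auto
      finally show "ennreal (Fk k x * indicator \<Omega> x) \<le> ennreal (\<phi> x * indicator \<Omega> x) + ennreal e" .
    qed
    also have "\<dots> = (\<integral>\<^sup>+ x. ennreal (\<phi> x * indicator \<Omega> x) \<partial>\<nu>) + (\<integral>\<^sup>+ x. ennreal e \<partial>\<nu>)"
      by (rule nn_integral_add) (use \<phi>_meas ind_meas in measurable)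
    also have "(\<integral>\<^sup>+ x. ennreal e \<partial>\<nu>) = ennreal e"
      using prob_space.emeasure_space_1[OF ps] by simp
    also have "(\<integral>\<^sup>+ x. ennreal (\<phi> x * indicator \<Omega> x) \<partial>\<nu>) = ennreal (\<integral> x. \<phi> x \<partial>\<nu>)"
      by (rule P2_nn_eq_integral[OF P cl \<phi>c \<phi>0 \<phi>M])
    also have "ennreal (\<integral> x. \<phi> x \<partial>\<nu>) \<le> liminf (\<lambda>n. \<integral>\<^sup>+ x\<in>\<Omega>. ennreal (G n x) \<partial>(\<nu>s n))"
    proof -
      have bnd: "bounded (range \<phi>)"
        unfolding bounded_iff using \<phi>0 \<phi>M by (intro exI[of _ M]) auto
      have "(\<lambda>n. \<integral> x. \<phi> x \<partial>(\<nu>s n)) \<longlonglongrightarrow> (\<integral> x. \<phi> x \<partial>\<nu>)"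
        using nc \<phi>c bnd unfolding narrow_conv_def by blast
      then have lim: "(\<lambda>n. ennreal (\<integral> x. \<phi> x \<partial>(\<nu>s n))) \<longlonglongrightarrow> ennreal (\<integral> x. \<phi> x \<partial>\<nu>)"
        by (rule tendsto_ennrealI)
      have "ennreal (\<integral> x. \<phi> x \<partial>\<nu>) = liminf (\<lambda>n. ennreal (\<integral> x. \<phi> x \<partial>(\<nu>s n)))"
        by (rule lim_imp_Liminf[symmetric]) (use lim in auto)
      also have "\<dots> \<le> liminf (\<lambda>n. \<integral>\<^sup>+ x\<in>\<Omega>. ennreal (G n x) \<partial>(\<nu>s n))"
      proof (rule Liminf_mono)
        show "\<forall>\<^sub>F n in sequentially. ennreal (\<integral> x. \<phi> x \<partial>(\<nu>s n)) \<le> (\<integral>\<^sup>+ x\<in>\<Omega>. ennreal (G n x) \<partial>(\<nu>s n))"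
          using unif[OF e]
        proof eventually_elim
          case (elim n)
          have "ennreal (\<integral> x. \<phi> x \<partial>(\<nu>s n)) = (\<integral>\<^sup>+ x. ennreal (\<phi> x * indicator \<Omega> x) \<partial>(\<nu>s n))"
            by (rule P2_nn_eq_integral[OF _ cl \<phi>c \<phi>0 \<phi>M, symmetric]) (use Pn in auto)
          also have "\<dots> \<le> (\<integral>\<^sup>+ x\<in>\<Omega>. ennreal (G n x) \<partial>(\<nu>s n))"
          proof (rule nn_integral_mono)
            fix x
            show "ennreal (\<phi> x * indicator \<Omega> x) \<le> ennreal (G n x) * indicator \<Omega> x"
            proof (cases "x \<in> \<Omega>")
              case True
              have "\<phi> x \<le> G n x" using elim True FkF[OF True, of k] G0[OF True, of n]
                by (auto simp: \<phi>_def)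
              then show ?thesis using True by (simp add: ennreal_leI)
            qed simp
          qed
          finally show ?case .
        qed
      qed
      finally show ?thesis .
    qed
    finally show "(\<integral>\<^sup>+ x. ennreal (Fk k x * indicator \<Omega> x) \<partial>\<nu>) \<le> liminf (\<lambda>n. \<integral>\<^sup>+ x\<in>\<Omega>. ennreal (G n x) \<partial>(\<nu>s n)) + ennreal e"
      by (simp add: add_right_mono)
  qed
  show ?thesis
    using step1 step2 step3 by (simp add: SUP_least order_trans)
qed

lemma tp_lsc:
  fixes \<Omega> :: "'a::euclidean_space set" and v :: "'a \<Rightarrow> 'a"
  assumes cl: "closed \<Omega>" and eta: "\<eta> > 0" and pr: "prox_regular \<eta> \<Omega>"
    and vc: "continuous_on \<Omega> v" and vB: "\<And>y. y \<in> \<Omega> \<Longrightarrow> norm (v y) \<le> B"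
    and x: "x \<in> \<Omega>" and e: "e > 0"
  shows "\<exists>\<delta>>0. \<forall>y\<in>\<Omega>. dist y x < \<delta> \<longrightarrow> norm (tangent_proj \<Omega> x (v x)) - e < norm (tangent_proj \<Omega> y (v y))"
proof (rule ccontr)
  assume neg: "\<not> ?thesis"
  have "\<forall>n. \<exists>y. y \<in> \<Omega> \<and> dist y x < inverse (real (Suc n)) \<and> norm (tangent_proj \<Omega> y (v y)) \<le> norm (tangent_proj \<Omega> x (v x)) - e"
  proof
    fix n
    have "inverse (real (Suc n)) > 0" by simp
    then have "\<not> (\<forall>y\<in>\<Omega>. dist y x < inverse (real (Suc n)) \<longrightarrow> norm (tangent_proj \<Omega> x (v x)) - e < norm (tangent_proj \<Omega> y (v y)))"
      using neg by blast
    then show "\<exists>y. y \<in> \<Omega> \<and> dist y x < inverse (real (Suc n)) \<and> norm (tangent_proj \<Omega> y (v y)) \<le> norm (tangent_proj \<Omega> x (v x)) - e"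
      by (auto simp: not_less)
  qed
  then obtain Y where Y: "\<forall>n. Y n \<in> \<Omega> \<and> dist (Y n) x < inverse (real (Suc n)) \<and> norm (tangent_proj \<Omega> (Y n) (v (Y n))) \<le> norm (tangent_proj \<Omega> x (v x)) - e"
    by (rule choice[THEN exE])
  have YO: "\<And>n. Y n \<in> \<Omega>" using Y by blast
  have "(\<lambda>n. dist (Y n) x) \<longlonglongrightarrow> 0"
  proof (rule tendsto_sandwich[of "\<lambda>n. 0" _ _ "\<lambda>n. inverse (real (Suc n))"])
    show "\<forall>\<^sub>F n in sequentially. 0 \<le> dist (Y n) x" by simp
    have "\<And>n. dist (Y n) x \<le> inverse (real (Suc n))" using Y by (simp add: less_imp_le)
    then show "\<forall>\<^sub>F n in sequentially. dist (Y n) x \<le> inverse (real (Suc n))" by simp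
    show "(\<lambda>n. 0) \<longlonglongrightarrow> 0" by simp
    show "(\<lambda>n. inverse (real (Suc n))) \<longlonglongrightarrow> 0" by (rule LIMSEQ_inverse_real_of_nat)
  qed
  then have Yx: "Y \<longlonglongrightarrow> x" using tendsto_dist_iff by blast
  define c where "c = (\<lambda>n. closest_point (NC \<eta> \<Omega> (Y n)) (v (Y n)))"
  have cN: "c n \<in> NC \<eta> \<Omega> (Y n)" for n
    unfolding c_def by (rule closest_point_in_set[OF NC_closed[OF eta]]) (use NC_zero in blast)
  have cb: "c n \<in> cball 0 (2 * B)" for n
  proof -
    have "dist (v (Y n)) (c n) \<le> dist (v (Y n)) 0"
      unfolding c_def by (rule closest_point_le[OF NC_closed[OF eta] NC_zero])
    then have "norm (v (Y n) - c n) \<le> norm (v (Y n))" by (simp add: dist_norm)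
    moreover have "norm (c n) \<le> norm (v (Y n)) + norm (v (Y n) - c n)"
      by (metis add.commute diff_add_cancel norm_triangle_ineq4 norm_minus_commute add_diff_cancel_left')
    ultimately show ?thesis using vB[OF YO[of n]] by simp
  qed
  have "seq_compact (cball (0::'a) (2 * B))" by (intro compact_imp_seq_compact compact_cball)
  then obtain cl r where r: "strict_mono r" and lim: "(c \<circ> r) \<longlonglongrightarrow> cl"
    using cb by (metis seq_compactE)
  have Yr: "(Y \<circ> r) \<longlonglongrightarrow> x" using Yx r LIMSEQ_subseq_LIMSEQ by blast
  have clN: "cl \<in> NC \<eta> \<Omega> x" by (rule NC_limit[OF eta Yr lim]) (simp add: cN)
  have vYr: "(\<lambda>n. v ((Y \<circ> r) n)) \<longlonglongrightarrow> v x"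
    using continuous_on_tendsto_compose[OF vc Yr x] YO by (simp add: o_def)
  have "(\<lambda>n. norm (v ((Y \<circ> r) n) - (c \<circ> r) n)) \<longlonglongrightarrow> norm (v x - cl)"
    by (intro tendsto_intros vYr lim)
  moreover have "norm (v ((Y \<circ> r) n) - (c \<circ> r) n) \<le> norm (tangent_proj \<Omega> x (v x)) - e" for n
  proof -
    have "tangent_proj \<Omega> (Y (r n)) (v (Y (r n))) = v (Y (r n)) - c (r n)"
      unfolding c_def by (rule tp_eq[OF cl eta pr YO])
    then show ?thesis using Y by (metis comp_apply)
  qed
  ultimately have "norm (v x - cl) \<le> norm (tangent_proj \<Omega> x (v x)) - e"
    by (intro LIMSEQ_le_const2) auto
  moreover have "norm (tangent_proj \<Omega> x (v x)) \<le> norm (v x - cl)" by (rule tp_le[OF cl eta pr x clN])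
  ultimately show False using e by simp
qed

lemma sq_lemma:
  fixes a b d M :: real
  assumes "0 \<le> a" "a \<le> M" "0 \<le> b" "a - d \<le> b" "0 \<le> d"
  shows "a\<^sup>2 - 2 * d * M \<le> b\<^sup>2"
proof (cases "a \<le> d")
  case True
  have "a * a \<le> a * d" using True assms(1) by (rule mult_left_mono)
  also have "\<dots> \<le> M * d" using assms by (intro mult_right_mono) auto
  finally have "a\<^sup>2 \<le> M * d" by (simp add: power2_eq_square)
  moreover have "0 \<le> M * d" using assms by simp
  moreover have "0 \<le> b\<^sup>2" by simp
  moreover have "2 * d * M = 2 * (M * d)" by simp
  ultimately show ?thesis by linarith
next
  case False
  then have "(a - d)\<^sup>2 \<le> b\<^sup>2" using assms by (intro power_mono) auto
  moreover have "a\<^sup>2 - 2 * d * M \<le> (a - d)\<^sup>2"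
  proof -
    have "d * a \<le> d * M" using assms by (intro mult_left_mono) auto
    moreover have "(a - d)\<^sup>2 = a\<^sup>2 - 2 * (d * a) + d\<^sup>2" by (simp add: power2_diff algebra_simps)
    moreover have "0 \<le> d\<^sup>2" by simp
    moreover have "2 * d * M = 2 * (d * M)" by simp
    ultimately show ?thesis by linarith
  qed
  ultimately show ?thesis by simp
qed

lemma set_int_bound:
  fixes g :: "'a::euclidean_space \<Rightarrow> 'b::euclidean_space"
  assumes P: "\<mu> \<in> P2 \<Omega>" and cl: "closed \<Omega>" and gc: "continuous_on UNIV g"
    and gB: "\<And>y. y \<in> \<Omega> \<Longrightarrow> norm (g y) \<le> B"
  shows "set_integrable \<mu> \<Omega> g" and "norm (LINT y:\<Omega>|\<mu>. g y) \<le> B"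
proof -
  have ps: "prob_space \<mu>" and s: "sets \<mu> = sets borel" using P by (auto simp: P2_def)
  have AE: "AE y in \<mu>. y \<in> \<Omega>" by (rule AE_in_P2[OF P cl])
  have mb: "(\<lambda>y. indicator \<Omega> y *\<^sub>R g y) \<in> borel_measurable borel"
    by (rule borel_measurable_scaleR[OF borel_measurable_indicator borel_measurable_continuous_onI[OF gc]])
       (use cl in simp)
  have m: "(\<lambda>y. indicator \<Omega> y *\<^sub>R g y) \<in> borel_measurable \<mu>" by (rule meas_borel[OF s mb])
  have bnd: "AE y in \<mu>. norm (indicator \<Omega> y *\<^sub>R g y) \<le> B"
    using AE by eventually_elim (simp add: gB)
  have int: "integrable \<mu> (\<lambda>y. indicator \<Omega> y *\<^sub>R g y)"
    by (rule finite_measure.integrable_const_bound[OF _ bnd m]) (use ps in \<open>simp add: prob_space_def\<close>)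
  then show "set_integrable \<mu> \<Omega> g" by (simp add: set_integrable_def)
  have "norm (LINT y:\<Omega>|\<mu>. g y) \<le> (\<integral>y. norm (indicator \<Omega> y *\<^sub>R g y) \<partial>\<mu>)"
    unfolding set_lebesgue_integral_def by (rule integral_norm_bound)
  also have "\<dots> \<le> (\<integral>y. B \<partial>\<mu>)"
    by (rule integral_mono_AE[OF integrable_norm[OF int] _ bnd])
       (use ps in \<open>simp add: prob_space_def finite_measure.integrable_const\<close>)
  also have "\<dots> = B" using prob_space.prob_space[OF ps] by simp
  finally show "norm (LINT y:\<Omega>|\<mu>. g y) \<le> B" .
qed

lemma narrow_vec:
  fixes g :: "'a::euclidean_space \<Rightarrow> 'a"
  assumes Pn: "\<forall>n. \<nu>s n \<in> P2 \<Omega>" and P: "\<nu> \<in> P2 \<Omega>" and nc: "narrow_conv \<nu>s \<nu>"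
    and cl: "closed \<Omega>" and gc: "continuous_on UNIV g" and gB: "\<And>y. y \<in> \<Omega> \<Longrightarrow> norm (g y) \<le> B"
  shows "(\<lambda>n. LINT y:\<Omega>|\<nu>s n. g y) \<longlonglongrightarrow> (LINT y:\<Omega>|\<nu>. g y)"
proof -
  have comp: "(\<lambda>n. (LINT y:\<Omega>|\<nu>s n. g y) \<bullet> b) \<longlonglongrightarrow> (LINT y:\<Omega>|\<nu>. g y) \<bullet> b" if b: "b \<in> Basis" for b
  proof -
    define \<phi> where "\<phi> = (\<lambda>y. max (- B) (min B (g y \<bullet> b)))"
    have \<phi>c: "continuous_on UNIV \<phi>" unfolding \<phi>_def by (intro continuous_intros gc)
    have \<phi>b: "bounded (range \<phi>)"
      unfolding bounded_iff by (intro exI[of _ "\<bar>B\<bar>"]) (auto simp: \<phi>_def)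
    have eq: "(LINT y:\<Omega>|\<mu>. g y) \<bullet> b = (\<integral>y. \<phi> y \<partial>\<mu>)" if \<mu>: "\<mu> \<in> P2 \<Omega>" for \<mu>
    proof -
      have s: "sets \<mu> = sets borel" using \<mu> by (auto simp: P2_def)
      have int: "integrable \<mu> (\<lambda>y. indicator \<Omega> y *\<^sub>R g y)"
        using set_int_bound(1)[OF \<mu> cl gc gB] by (simp add: set_integrable_def)
      have "(LINT y:\<Omega>|\<mu>. g y) \<bullet> b = (\<integral>y. (indicator \<Omega> y *\<^sub>R g y) \<bullet> b \<partial>\<mu>)"
        unfolding set_lebesgue_integral_def by (rule integral_inner_left[symmetric]) (use int in simp)
      also have "\<dots> = (\<integral>y. \<phi> y \<partial>\<mu>)"
      proof (rule integral_cong_AE)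
        show "(\<lambda>y. (indicator \<Omega> y *\<^sub>R g y) \<bullet> b) \<in> borel_measurable \<mu>"
          by (rule meas_borel[OF s], rule borel_measurable_inner[OF borel_measurable_scaleR[OF borel_measurable_indicator borel_measurable_continuous_onI[OF gc]] borel_measurable_const])
             (use cl in simp)
        show "\<phi> \<in> borel_measurable \<mu>" by (rule meas_borel[OF s borel_measurable_continuous_onI[OF \<phi>c]])
        show "AE y in \<mu>. (indicator \<Omega> y *\<^sub>R g y) \<bullet> b = \<phi> y"
          using AE_in_P2[OF \<mu> cl]
        proof eventually_elim
          case (elim y)
          have "\<bar>g y \<bullet> b\<bar> \<le> norm (g y)" by (rule Basis_le_norm[OF b])
          then have "\<bar>g y \<bullet> b\<bar> \<le> B" using gB[OF elim] by linarith
          then show ?case using elim by (auto simp: \<phi>_def)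
        qed
      qed
      finally show ?thesis .
    qed
    have "(\<lambda>n. \<integral>y. \<phi> y \<partial>(\<nu>s n)) \<longlonglongrightarrow> (\<integral>y. \<phi> y \<partial>\<nu>)"
      using nc \<phi>c \<phi>b unfolding narrow_conv_def by blast
    then show ?thesis using eq[OF P] eq Pn by simp
  qed
  have "(\<lambda>n. \<Sum>b\<in>Basis. ((LINT y:\<Omega>|\<nu>s n. g y) \<bullet> b) *\<^sub>R b) \<longlonglongrightarrow> (\<Sum>b\<in>Basis. ((LINT y:\<Omega>|\<nu>. g y) \<bullet> b) *\<^sub>R b)"
    by (intro tendsto_sum tendsto_scaleR comp tendsto_const)
  then show ?thesis by (simp add: euclidean_representation)
qed

theorem lemma3p7:
  fixes \<Omega> :: "'a::euclidean_space set" and \<eta> lamW lamV :: real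
    and W V :: "'a \<Rightarrow> real" and gW gV :: "'a \<Rightarrow> 'a"
    and \<nu>s :: "nat \<Rightarrow> 'a measure" and \<nu> :: "'a measure"
  assumes "bounded \<Omega>" and "closed \<Omega>" and "\<eta> > 0" and "prox_regular \<eta> \<Omega>"
    and "C1_with_gradient W gW"
    and "geod_convex_on lamW (convex hull {x - y | x y. x \<in> \<Omega> \<and> y \<in> \<Omega>}) W gW"
    and "C1_with_gradient V gV"
    and "geod_convex_on lamV (convex hull \<Omega>) V gV"
    and "\<forall>n. \<nu>s n \<in> P2 \<Omega>" and "\<nu> \<in> P2 \<Omega>"
    and "narrow_conv \<nu>s \<nu>"
    and "(SUP n. \<integral>\<^sup>+ x\<in>\<Omega>. ennreal ((norm x)\<^sup>2) \<partial>(\<nu>s n)) < \<infinity>"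
  shows "(\<integral>\<^sup>+ x\<in>\<Omega>. ennreal ((norm (tangent_proj \<Omega> x
              (- (LINT y:\<Omega>|\<nu>. gW (x - y)) - gV x)))\<^sup>2) \<partial>\<nu>)
         \<le> liminf (\<lambda>n. \<integral>\<^sup>+ x\<in>\<Omega>. ennreal ((norm (tangent_proj \<Omega> x
              (- (LINT y:\<Omega>|\<nu>s n. gW (x - y)) - gV x)))\<^sup>2) \<partial>(\<nu>s n))"

proof -
  note A = assms
  have cl: "closed \<Omega>" and eta: "\<eta> > 0" and pr: "prox_regular \<eta> \<Omega>" using A by auto
  have Pn: "\<forall>n. \<nu>s n \<in> P2 \<Omega>" and P: "\<nu> \<in> P2 \<Omega>" and nc: "narrow_conv \<nu>s \<nu>" using A by auto
  have cpt: "compact \<Omega>" using A(1,2) by (simp add: compact_eq_bounded_closed)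
  have ne: "\<Omega> \<noteq> {}"
  proof
    assume "\<Omega> = {}"
    then have "emeasure \<nu> \<Omega> = 0" by simp
    then show False using P by (simp add: P2_def)
  qed
  then obtain x0 where x0: "x0 \<in> \<Omega>" by blast
  have gWc: "continuous_on UNIV gW" using A(5) by (simp add: C1_with_gradient_def)
  have gVc: "continuous_on UNIV gV" using A(7) by (simp add: C1_with_gradient_def)
  obtain R where R: "\<And>x. x \<in> \<Omega> \<Longrightarrow> norm x \<le> R" using A(1) unfolding bounded_iff by blast
  define D where "D = cball (0::'a) (2 * R)"
  have xyD: "x - y \<in> D" if "x \<in> \<Omega>" "y \<in> \<Omega>" for x y
  proof -
    have "norm (x - y) \<le> norm x + norm y" by (rule norm_triangle_ineq4)
    then show ?thesis using R[OF that(1)] R[OF that(2)] by (simp add: D_def)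
  qed
  have cD: "compact D" by (simp add: D_def)
  have "bounded (gW ` D)"
    by (rule compact_imp_bounded[OF compact_continuous_image[OF continuous_on_subset[OF gWc] cD]]) simp
  then obtain BW where BW: "\<And>z. z \<in> D \<Longrightarrow> norm (gW z) \<le> BW" unfolding bounded_iff by blast
  have "bounded (gV ` \<Omega>)"
    by (rule compact_imp_bounded[OF compact_continuous_image[OF continuous_on_subset[OF gVc] cpt]]) simp
  then obtain BV where BV: "\<And>z. z \<in> \<Omega> \<Longrightarrow> norm (gV z) \<le> BV" unfolding bounded_iff by blast
  have BW0: "0 \<le> BW" using BW[OF xyD[OF x0 x0]] by (meson norm_ge_zero order_trans)
  have BV0: "0 \<le> BV" using BV[OF x0] by (meson norm_ge_zero order_trans)
  have uc: "uniformly_continuous_on D gW"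
    by (rule compact_uniformly_continuous[OF continuous_on_subset[OF gWc] cD]) simp
  define h where "h = (\<lambda>\<mu> x. LINT y:\<Omega>|\<mu>. gW (x - y))"
  have gxc: "continuous_on UNIV (\<lambda>y. gW (x - y))" for x
    by (rule continuous_on_compose2[OF gWc]) (auto intro!: continuous_intros)
  have gxB: "norm (gW (x - y)) \<le> BW" if "x \<in> \<Omega>" "y \<in> \<Omega>" for x y using BW[OF xyD[OF that]] .
  have hB: "norm (h \<mu> x) \<le> BW" if "\<mu> \<in> P2 \<Omega>" "x \<in> \<Omega>" for \<mu> x
    unfolding h_def by (rule set_int_bound(2)[OF that(1) cl gxc]) (use gxB that in auto)
  have equi: "\<exists>d>0. \<forall>\<mu>\<in>P2 \<Omega>. \<forall>x\<in>\<Omega>. \<forall>x'\<in>\<Omega>. dist x x' < d \<longrightarrow> norm (h \<mu> x - h \<mu> x') \<le> e"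
    if e: "e > 0" for e
  proof -
    obtain d where d: "d > 0" and dd: "\<forall>a\<in>D. \<forall>b\<in>D. dist b a < d \<longrightarrow> dist (gW b) (gW a) < e"
      using uc e unfolding uniformly_continuous_on_def by blast
    show ?thesis
    proof (intro exI[of _ d] conjI ballI impI d)
      fix \<mu> x x' assume \<mu>: "\<mu> \<in> P2 \<Omega>" and x: "x \<in> \<Omega>" and x': "x' \<in> \<Omega>" and dx: "dist x x' < d"
      have "h \<mu> x - h \<mu> x' = (LINT y:\<Omega>|\<mu>. gW (x - y) - gW (x' - y))"
        unfolding h_def by (rule set_integral_diff(2)[symmetric]; rule set_int_bound(1)[OF \<mu> cl gxc]) (use gxB x x' in auto)
      also have "norm \<dots> \<le> e"
      proof (rule set_int_bound(2)[OF \<mu> cl])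
        show "continuous_on UNIV (\<lambda>y. gW (x - y) - gW (x' - y))" by (intro continuous_on_diff gxc)
        fix y assume y: "y \<in> \<Omega>"
        have "dist (x - y) (x' - y) < d" using dx by (simp add: dist_norm)
        then have "dist (gW (x - y)) (gW (x' - y)) < e" using dd xyD[OF x' y] xyD[OF x y] by blast
        then show "norm (gW (x - y) - gW (x' - y)) \<le> e" by (simp add: dist_norm)
      qed
      finally show "norm (h \<mu> x - h \<mu> x') \<le> e" .
    qed
  qed
  have pw: "(\<lambda>n. h (\<nu>s n) x) \<longlonglongrightarrow> h \<nu> x" if x: "x \<in> \<Omega>" for x
    unfolding h_def by (rule narrow_vec[OF Pn P nc cl gxc]) (use gxB x in auto)
  have unifc: "eventually (\<lambda>n. \<forall>x\<in>\<Omega>. norm (h (\<nu>s n) x - h \<nu> x) < e) sequentially" if e: "e > 0" for e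
  proof -
    have e3: "e / 3 > 0" using e by simp
    obtain d where d: "d > 0" and dd: "\<forall>\<mu>\<in>P2 \<Omega>. \<forall>x\<in>\<Omega>. \<forall>x'\<in>\<Omega>. dist x x' < d \<longrightarrow> norm (h \<mu> x - h \<mu> x') \<le> e / 3"
      using equi[OF e3] by blast
    have cov: "\<Omega> \<subseteq> (\<Union>c\<in>\<Omega>. ball c d)" using d by auto
    obtain C where C: "C \<subseteq> \<Omega>" "finite C" "\<Omega> \<subseteq> (\<Union>c\<in>C. ball c d)"
      using compactE_image[where C=\<Omega> and f="\<lambda>c. ball c d", OF cpt _ cov] by auto
    have "\<forall>c\<in>C. eventually (\<lambda>n. norm (h (\<nu>s n) c - h \<nu> c) < e / 3) sequentially"
    proof
      fix c assume "c \<in> C"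
      then have "(\<lambda>n. h (\<nu>s n) c) \<longlonglongrightarrow> h \<nu> c" using pw C(1) by blast
      then show "eventually (\<lambda>n. norm (h (\<nu>s n) c - h \<nu> c) < e / 3) sequentially"
        using e3 unfolding tendsto_iff dist_norm by blast
    qed
    then have "eventually (\<lambda>n. \<forall>c\<in>C. norm (h (\<nu>s n) c - h \<nu> c) < e / 3) sequentially"
      by (rule eventually_ball_finite[OF C(2)])
    then show ?thesis
    proof (rule eventually_mono)
      fix n assume H: "\<forall>c\<in>C. norm (h (\<nu>s n) c - h \<nu> c) < e / 3"
      show "\<forall>x\<in>\<Omega>. norm (h (\<nu>s n) x - h \<nu> x) < e"
      proof
        fix x assume x: "x \<in> \<Omega>"
        then obtain c where c: "c \<in> C" "x \<in> ball c d" using C(3) by blast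
        have cO: "c \<in> \<Omega>" using c C(1) by blast
        have dxc: "dist x c < d" using c by (simp add: dist_commute)
        have n1: "norm (h (\<nu>s n) x - h (\<nu>s n) c) \<le> e / 3" using dd Pn x cO dxc by blast
        have "norm (h \<nu> x - h \<nu> c) \<le> e / 3" using dd P x cO dxc by blast
        then have n3: "norm (h \<nu> c - h \<nu> x) \<le> e / 3" by (simp add: norm_minus_commute)
        have n2: "norm (h (\<nu>s n) c - h \<nu> c) < e / 3" using H c by blast
        have "norm (h (\<nu>s n) x - h \<nu> x) \<le> norm (h (\<nu>s n) x - h (\<nu>s n) c) + norm (h (\<nu>s n) c - h \<nu> c) + norm (h \<nu> c - h \<nu> x)"
        proof -
          have "norm (h (\<nu>s n) x - h \<nu> x) = norm ((h (\<nu>s n) x - h (\<nu>s n) c) + (h (\<nu>s n) c - h \<nu> c) + (h \<nu> c - h \<nu> x))"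
            by (rule arg_cong[where f=norm]) simp
          moreover have "norm ((h (\<nu>s n) x - h (\<nu>s n) c) + (h (\<nu>s n) c - h \<nu> c) + (h \<nu> c - h \<nu> x))
             \<le> norm ((h (\<nu>s n) x - h (\<nu>s n) c) + (h (\<nu>s n) c - h \<nu> c)) + norm (h \<nu> c - h \<nu> x)"
            by (rule norm_triangle_ineq)
          moreover have "norm ((h (\<nu>s n) x - h (\<nu>s n) c) + (h (\<nu>s n) c - h \<nu> c))
             \<le> norm (h (\<nu>s n) x - h (\<nu>s n) c) + norm (h (\<nu>s n) c - h \<nu> c)"
            by (rule norm_triangle_ineq)
          ultimately show ?thesis by linarith
        qed
        then show "norm (h (\<nu>s n) x - h \<nu> x) < e" using n1 n2 n3 by linarith
      qed
    qed
  qed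
  define v where "v = (\<lambda>\<mu> x. - h \<mu> x - gV x)"
  define Mv where "Mv = BW + BV"
  have Mv0: "0 \<le> Mv" using BW0 BV0 by (simp add: Mv_def)
  have vB: "norm (v \<mu> x) \<le> Mv" if "\<mu> \<in> P2 \<Omega>" "x \<in> \<Omega>" for \<mu> x
  proof -
    have "norm (v \<mu> x) \<le> norm (h \<mu> x) + norm (gV x)"
      unfolding v_def using norm_triangle_ineq4[of "- h \<mu> x" "gV x"] by simp
    then show ?thesis using hB[OF that] BV[OF that(2)] by (simp add: Mv_def)
  qed
  have hc: "continuous_on \<Omega> (h \<nu>)"
    unfolding continuous_on_iff
  proof (intro ballI allI impI)
    fix x and e :: real assume x: "x \<in> \<Omega>" and e: "e > 0"
    obtain d where d: "d > 0" and dd: "\<forall>\<mu>\<in>P2 \<Omega>. \<forall>x\<in>\<Omega>. \<forall>x'\<in>\<Omega>. dist x x' < d \<longrightarrow> norm (h \<mu> x - h \<mu> x') \<le> e / 2"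
      using equi[of "e/2"] e by auto
    show "\<exists>d>0. \<forall>x'\<in>\<Omega>. dist x' x < d \<longrightarrow> dist (h \<nu> x') (h \<nu> x) < e"
    proof (intro exI[of _ d] conjI ballI impI d)
      fix x' assume x': "x' \<in> \<Omega>" and dx: "dist x' x < d"
      have "norm (h \<nu> x' - h \<nu> x) \<le> e / 2" using dd P x x' dx by blast
      then show "dist (h \<nu> x') (h \<nu> x) < e" using e by (simp add: dist_norm)
    qed
  qed
  have vc: "continuous_on \<Omega> (v \<nu>)"
    unfolding v_def by (intro continuous_on_diff continuous_on_minus hc continuous_on_subset[OF gVc]) auto
  define F where "F = (\<lambda>x. (norm (tangent_proj \<Omega> x (v \<nu> x)))\<^sup>2)"
  define G where "G = (\<lambda>n x. (norm (tangent_proj \<Omega> x (v (\<nu>s n) x)))\<^sup>2)"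
  have fM: "norm (tangent_proj \<Omega> x (v \<nu> x)) \<le> Mv" if x: "x \<in> \<Omega>" for x
    using tp_le0[OF cl eta pr x, of "v \<nu> x"] vB[OF P x] by linarith
  have "(\<integral>\<^sup>+ x\<in>\<Omega>. ennreal (F x) \<partial>\<nu>) \<le> liminf (\<lambda>n. \<integral>\<^sup>+ x\<in>\<Omega>. ennreal (G n x) \<partial>(\<nu>s n))"
  proof (rule liminf_abstract[OF cl ne Pn P nc, where M="Mv\<^sup>2"])
    show "\<And>x. x \<in> \<Omega> \<Longrightarrow> 0 \<le> F x" by (simp add: F_def)
    show "\<And>n x. x \<in> \<Omega> \<Longrightarrow> 0 \<le> G n x" by (simp add: G_def)
    show "\<And>x. x \<in> \<Omega> \<Longrightarrow> F x \<le> Mv\<^sup>2"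
      unfolding F_def using fM by (intro power_mono) auto
    show "\<exists>\<delta>>0. \<forall>y\<in>\<Omega>. dist y x < \<delta> \<longrightarrow> F x - e \<le> F y" if x: "x \<in> \<Omega>" and e: "e > 0" for x e
    proof -
      define e' where "e' = e / (2 * Mv + 1)"
      have e'0: "e' > 0" using e Mv0 by (simp add: e'_def)
      have e'M: "2 * e' * Mv \<le> e"
      proof -
        have "2 * e' * Mv \<le> e' * (2 * Mv + 1)" using e'0 by (simp add: algebra_simps)
        also have "\<dots> = e" using Mv0 by (simp add: e'_def)
        finally show ?thesis .
      qed
      obtain \<delta> where d: "\<delta> > 0" and dd: "\<forall>y\<in>\<Omega>. dist y x < \<delta> \<longrightarrow> norm (tangent_proj \<Omega> x (v \<nu> x)) - e' < norm (tangent_proj \<Omega> y (v \<nu> y))"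
        using tp_lsc[OF cl eta pr vc vB[OF P] x e'0] by blast
      show ?thesis
      proof (intro exI[of _ \<delta>] conjI ballI impI d)
        fix y assume y: "y \<in> \<Omega>" and dy: "dist y x < \<delta>"
        have "F x - 2 * e' * Mv \<le> F y" unfolding F_def
          by (rule sq_lemma) (use dd y dy fM[OF x] e'0 in auto)
        then show "F x - e \<le> F y" using e'M by linarith
      qed
    qed
    show "eventually (\<lambda>n. \<forall>x\<in>\<Omega>. F x - e \<le> G n x) sequentially" if e: "e > 0" for e
    proof -
      define e' where "e' = e / (2 * Mv + 1)"
      have e'0: "e' > 0" using e Mv0 by (simp add: e'_def)
      have e'M: "2 * e' * Mv \<le> e"
      proof -
        have "2 * e' * Mv \<le> e' * (2 * Mv + 1)" using e'0 by (simp add: algebra_simps)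
        also have "\<dots> = e" using Mv0 by (simp add: e'_def)
        finally show ?thesis .
      qed
      show ?thesis using unifc[OF e'0]
      proof (rule eventually_mono)
        fix n assume H: "\<forall>x\<in>\<Omega>. norm (h (\<nu>s n) x - h \<nu> x) < e'"
        show "\<forall>x\<in>\<Omega>. F x - e \<le> G n x"
        proof
          fix x assume x: "x \<in> \<Omega>"
          have "\<bar>norm (tangent_proj \<Omega> x (v \<nu> x)) - norm (tangent_proj \<Omega> x (v (\<nu>s n) x))\<bar> \<le> norm (v \<nu> x - v (\<nu>s n) x)"
            by (rule tp_lip[OF cl eta pr x])
          also have "v \<nu> x - v (\<nu>s n) x = h (\<nu>s n) x - h \<nu> x" by (simp add: v_def)
          finally have "norm (tangent_proj \<Omega> x (v \<nu> x)) - e' \<le> norm (tangent_proj \<Omega> x (v (\<nu>s n) x))"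
            using H x by fastforce
          then have "F x - 2 * e' * Mv \<le> G n x" unfolding F_def G_def
            by (intro sq_lemma) (use fM[OF x] e'0 in auto)
          then show "F x - e \<le> G n x" using e'M by linarith
        qed
      qed
    qed
  qed
  then show ?thesis unfolding F_def G_def v_def h_def .
qed


end
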